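(* Let $\widetilde\lambda:\widetilde C\to\widetilde C'$ be a morphism of $\mathcal S$-complexes over $R$, with irreducible component $\lambda:(C,d)\to(C',d')$ and reducible component $\rho:(\mathsf R,r)\to(\mathsf R',r')$. Suppose $\lambda$ is chain homotopic to an isomorphism of chain complexes and $\rho$ is chain homotopic to an isomorphism of chain complexes. Then $\widetilde\lambda$ is $\mathcal S$-chain homotopic to an isomorphism of $\mathcal S$-complexes.
   Context: Let $R$ be a commutative ring. Graded modules are $\mathbb Z$-graded; for a graded module $V$, $V[i]$ denotes the graded module with $V[i]_j=V_{i+j}$; differentials have degree $-1$. An $\mathcal S$-complex over $R$ is a chain complex $(\widetilde C,\widetilde d)$ of finitely generated free graded $R$-modules with a graded decomposition $\widetilde C=C\oplus C[-1]\oplus\mathsf R$ with respect to which $\widetilde d=\begin{pmatrix} d&0&0\\ v&-d&\delta_2\\ \delta_1&0&r\end{pmatrix}$. The chain complexes $(C,d)$ and $(\mathsf R,r)$ are the irreducible and reducible complexes. A morphism $\widetilde\lambda:\widetilde C\to\widetilde C'$ of $\mathcal S$-complexes is a degree $0$ chain map of the form $\begin{pmatrix}\lambda&0&0\\ \mu&\lambda&\Delta_2\\ \Delta_1&0&\rho\end{pmatrix}$; $\lambda$ is its irreducible component and $\rho$ its reducible component (these are chain maps $(C,d)\to(C',d')$ and $(\mathsf R,r)\to(\mathsf R',r')$). An $\mathcal S$-chain homotopy between morphisms $\widetilde\lambda,\widetilde\lambda'$ is a degree $1$ map $\widetilde K$ of the form $\begin{pmatrix}K&0&0\\ L&-K&M_2\\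 M_1&0&J\end{pmatrix}$ with $\widetilde d'\widetilde K+\widetilde K\widetilde d=\widetilde\lambda-\widetilde\lambda'$. An isomorphism of $\mathcal S$-complexes is a morphism which is bijective and whose inverse is a morphism. *)

theory Defs
  imports Main
begin

text \<open>
Finitely generated free graded R-modules are represented by a finite homogeneous
basis B together with a degree function deg on basis elements.
An R-linear map V -> W is represented by its matrix f :: 'j => 'i => 'a,
where f j i is the coefficient of the basis vector j of W in the image of the
basis vector i of V (entries vanish outside BW x BV).
\<close>

type_synonym 'i gmod = "'i set \<times> ('i \<Rightarrow> int)"

definition gbasis :: "'i gmod \<Rightarrow> 'i set" where "gbasis V = fst V"
definition gdeg :: "'i gmod \<Rightarrow> 'i \<Rightarrow> int" where "gdeg V = snd V"

definition free_gmod :: "'i gmod \<Rightarrow> bool" where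
  "free_gmod V \<longleftrightarrow> finite (gbasis V)"

definition zmat :: "'j \<Rightarrow> 'i \<Rightarrow> 'a::zero" where "zmat = (\<lambda>_ _. 0)"

definition mneg :: "('j \<Rightarrow> 'i \<Rightarrow> 'a::uminus) \<Rightarrow> 'j \<Rightarrow> 'i \<Rightarrow> 'a" where
  "mneg f = (\<lambda>j i. - f j i)"

definition mat_on :: "'j set \<Rightarrow> 'i set \<Rightarrow> ('j \<Rightarrow> 'i \<Rightarrow> 'a::zero) \<Rightarrow> bool" where
  "mat_on BW BV f \<longleftrightarrow> (\<forall>j i. f j i \<noteq> 0 \<longrightarrow> j \<in> BW \<and> i \<in> BV)"

definition hom_deg :: "('j \<Rightarrow> int) \<Rightarrow> ('i \<Rightarrow> int) \<Rightarrow> int \<Rightarrow> ('j \<Rightarrow> 'i \<Rightarrow> 'a::zero) \<Rightarrow> bool" where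
  "hom_deg dW dV k f \<longleftrightarrow> (\<forall>j i. f j i \<noteq> 0 \<longrightarrow> dW j = dV i + k)"

definition graded_map :: "'i gmod \<Rightarrow> 'j gmod \<Rightarrow> int \<Rightarrow> ('j \<Rightarrow> 'i \<Rightarrow> 'a::zero) \<Rightarrow> bool" where
  "graded_map V W k f \<longleftrightarrow> mat_on (gbasis W) (gbasis V) f \<and> hom_deg (gdeg W) (gdeg V) k f"

definition mcomp :: "'i set \<Rightarrow> ('k \<Rightarrow> 'i \<Rightarrow> 'a::comm_ring_1) \<Rightarrow> ('i \<Rightarrow> 'j \<Rightarrow> 'a) \<Rightarrow> 'k \<Rightarrow> 'j \<Rightarrow> 'a" where
  "mcomp B f g = (\<lambda>k j. \<Sum>i\<in>B. f k i * g i j)"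

definition mid :: "'i set \<Rightarrow> 'i \<Rightarrow> 'i \<Rightarrow> 'a::comm_ring_1" where
  "mid B = (\<lambda>j i. if i \<in> B \<and> j = i then 1 else 0)"

definition madd :: "('j \<Rightarrow> 'i \<Rightarrow> 'a::plus) \<Rightarrow> ('j \<Rightarrow> 'i \<Rightarrow> 'a) \<Rightarrow> 'j \<Rightarrow> 'i \<Rightarrow> 'a" where
  "madd f g = (\<lambda>j i. f j i + g j i)"

definition msub :: "('j \<Rightarrow> 'i \<Rightarrow> 'a::minus) \<Rightarrow> ('j \<Rightarrow> 'i \<Rightarrow> 'a) \<Rightarrow> 'j \<Rightarrow> 'i \<Rightarrow> 'a" where
  "msub f g = (\<lambda>j i. f j i - g j i)"

definition chain_complex :: "'i gmod \<Rightarrow> ('i \<Rightarrow> 'i \<Rightarrow> 'a::comm_ring_1) \<Rightarrow> bool" where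
  "chain_complex V d \<longleftrightarrow> free_gmod V \<and> graded_map V V (-1) d \<and>
     mcomp (gbasis V) d d = zmat"

definition chain_map :: "'i gmod \<Rightarrow> ('i \<Rightarrow> 'i \<Rightarrow> 'a::comm_ring_1) \<Rightarrow> 'j gmod \<Rightarrow> ('j \<Rightarrow> 'j \<Rightarrow> 'a)
    \<Rightarrow> ('j \<Rightarrow> 'i \<Rightarrow> 'a) \<Rightarrow> bool" where
  "chain_map V d W e f \<longleftrightarrow> graded_map V W 0 f \<and> mcomp (gbasis W) e f = mcomp (gbasis V) f d"

definition is_chain_htpy :: "'i gmod \<Rightarrow> ('i \<Rightarrow> 'i \<Rightarrow> 'a::comm_ring_1) \<Rightarrow> 'j gmod \<Rightarrow> ('j \<Rightarrow> 'j \<Rightarrow> 'a)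
    \<Rightarrow> ('j \<Rightarrow> 'i \<Rightarrow> 'a) \<Rightarrow> ('j \<Rightarrow> 'i \<Rightarrow> 'a) \<Rightarrow> ('j \<Rightarrow> 'i \<Rightarrow> 'a) \<Rightarrow> bool" where
  "is_chain_htpy V d W e f g K \<longleftrightarrow> graded_map V W 1 K \<and>
     madd (mcomp (gbasis W) e K) (mcomp (gbasis V) K d) = msub f g"

definition chain_homotopic :: "'i gmod \<Rightarrow> ('i \<Rightarrow> 'i \<Rightarrow> 'a::comm_ring_1) \<Rightarrow> 'j gmod \<Rightarrow> ('j \<Rightarrow> 'j \<Rightarrow> 'a)
    \<Rightarrow> ('j \<Rightarrow> 'i \<Rightarrow> 'a) \<Rightarrow> ('j \<Rightarrow> 'i \<Rightarrow> 'a) \<Rightarrow> bool" where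
  "chain_homotopic V d W e f g \<longleftrightarrow> (\<exists>K. is_chain_htpy V d W e f g K)"

definition chain_iso :: "'i gmod \<Rightarrow> ('i \<Rightarrow> 'i \<Rightarrow> 'a::comm_ring_1) \<Rightarrow> 'j gmod \<Rightarrow> ('j \<Rightarrow> 'j \<Rightarrow> 'a)
    \<Rightarrow> ('j \<Rightarrow> 'i \<Rightarrow> 'a) \<Rightarrow> bool" where
  "chain_iso V d W e f \<longleftrightarrow> chain_map V d W e f \<and>
     (\<exists>g. chain_map W e V d g \<and> mcomp (gbasis W) g f = mid (gbasis V)
                                \<and> mcomp (gbasis V) f g = mid (gbasis W))"

text \<open>Basis of C + C[-1] + R: Inl (Inl i) for C, Inl (Inr i) for C[-1], Inr k for R.\<close>
definition blk :: "('j \<Rightarrow> 'i \<Rightarrow> 'a) \<Rightarrow> ('j \<Rightarrow> 'i \<Rightarrow> 'a) \<Rightarrow> ('j \<Rightarrow> 'k \<Rightarrow> 'a)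
   \<Rightarrow> ('j \<Rightarrow> 'i \<Rightarrow> 'a) \<Rightarrow> ('j \<Rightarrow> 'i \<Rightarrow> 'a) \<Rightarrow> ('j \<Rightarrow> 'k \<Rightarrow> 'a)
   \<Rightarrow> ('l \<Rightarrow> 'i \<Rightarrow> 'a) \<Rightarrow> ('l \<Rightarrow> 'i \<Rightarrow> 'a) \<Rightarrow> ('l \<Rightarrow> 'k \<Rightarrow> 'a)
   \<Rightarrow> ('j + 'j) + 'l \<Rightarrow> ('i + 'i) + 'k \<Rightarrow> 'a" where
  "blk A11 A12 A13 A21 A22 A23 A31 A32 A33 p q =
     (case p of
        Inl (Inl j) \<Rightarrow> (case q of Inl (Inl i) \<Rightarrow> A11 j i | Inl (Inr i) \<Rightarrow> A12 j i | Inr k \<Rightarrow> A13 j k)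
      | Inl (Inr j) \<Rightarrow> (case q of Inl (Inl i) \<Rightarrow> A21 j i | Inl (Inr i) \<Rightarrow> A22 j i | Inr k \<Rightarrow> A23 j k)
      | Inr l \<Rightarrow> (case q of Inl (Inl i) \<Rightarrow> A31 l i | Inl (Inr i) \<Rightarrow> A32 l i | Inr k \<Rightarrow> A33 l k))"

text \<open>Direct sum C + C[-1] + R; since C[-1]_n = C_(n-1), a basis element of C of
degree n yields a basis element of C[-1] of degree n+1.\<close>
definition dsum3 :: "'i gmod \<Rightarrow> 'k gmod \<Rightarrow> (('i + 'i) + 'k) gmod" where
  "dsum3 C R =
    (Inl ` Inl ` gbasis C \<union> Inl ` Inr ` gbasis C \<union> Inr ` gbasis R,
     (\<lambda>p. case p of Inl (Inl i) \<Rightarrow> gdeg C i | Inl (Inr i) \<Rightarrow> gdeg C i + 1 | Inr k \<Rightarrow> gdeg R k))"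

record ('i, 'k, 'a) scx =
  sC :: "'i gmod"
  sd :: "'i \<Rightarrow> 'i \<Rightarrow> 'a"
  sv :: "'i \<Rightarrow> 'i \<Rightarrow> 'a"
  sR :: "'k gmod"
  sr :: "'k \<Rightarrow> 'k \<Rightarrow> 'a"
  sdel1 :: "'k \<Rightarrow> 'i \<Rightarrow> 'a"
  sdel2 :: "'i \<Rightarrow> 'k \<Rightarrow> 'a"   (* delta_2 : R -> C[-1] *)

definition tot :: "('i, 'k, 'a, 'z) scx_scheme \<Rightarrow> (('i + 'i) + 'k) gmod" where
  "tot X = dsum3 (sC X) (sR X)"

definition tot_diff :: "('i, 'k, 'a::comm_ring_1, 'z) scx_scheme \<Rightarrow> ('i + 'i) + 'k \<Rightarrow> ('i + 'i) + 'k \<Rightarrow> 'a" where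
  "tot_diff X = blk (sd X) zmat zmat
                    (sv X) (mneg (sd X)) (sdel2 X)
                    (sdel1 X) zmat (sr X)"

definition is_scx :: "('i, 'k, 'a::comm_ring_1, 'z) scx_scheme \<Rightarrow> bool" where
  "is_scx X \<longleftrightarrow> free_gmod (sC X) \<and> free_gmod (sR X) \<and>
     mat_on (gbasis (sC X)) (gbasis (sC X)) (sd X) \<and>
     mat_on (gbasis (sC X)) (gbasis (sC X)) (sv X) \<and>
     mat_on (gbasis (sR X)) (gbasis (sR X)) (sr X) \<and>
     mat_on (gbasis (sR X)) (gbasis (sC X)) (sdel1 X) \<and>
     mat_on (gbasis (sC X)) (gbasis (sR X)) (sdel2 X) \<and>
     chain_complex (tot X) (tot_diff X)"

text \<open>Data of a morphism (lambda, mu, Delta_1, Delta_2, rho), and likewise of an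
S-chain homotopy (K, L, M_1, M_2, J).\<close>
record ('i, 'k, 'j, 'l, 'a) smap =
  m11 :: "'j \<Rightarrow> 'i \<Rightarrow> 'a"
  m21 :: "'j \<Rightarrow> 'i \<Rightarrow> 'a"
  m31 :: "'l \<Rightarrow> 'i \<Rightarrow> 'a"
  m23 :: "'j \<Rightarrow> 'k \<Rightarrow> 'a"
  m33 :: "'l \<Rightarrow> 'k \<Rightarrow> 'a"

definition tot_mor :: "('i, 'k, 'j, 'l, 'a::comm_ring_1) smap \<Rightarrow> ('j + 'j) + 'l \<Rightarrow> ('i + 'i) + 'k \<Rightarrow> 'a" where
  "tot_mor F = blk (m11 F) zmat zmat
                   (m21 F) (m11 F) (m23 F)
                   (m31 F) zmat (m33 F)"

definition tot_htpy :: "('i, 'k, 'j, 'l, 'a::comm_ring_1) smap \<Rightarrow> ('j + 'j) + 'l \<Rightarrow> ('i + 'i) + 'k \<Rightarrow> 'a" where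
  "tot_htpy H = blk (m11 H) zmat zmat
                    (m21 H) (mneg (m11 H)) (m23 H)
                    (m31 H) zmat (m33 H)"

definition smap_on :: "('i, 'k, 'a::comm_ring_1, 'z1) scx_scheme \<Rightarrow> ('j, 'l, 'a, 'z2) scx_scheme
    \<Rightarrow> ('i, 'k, 'j, 'l, 'a) smap \<Rightarrow> bool" where
  "smap_on X Y F \<longleftrightarrow>
     mat_on (gbasis (sC Y)) (gbasis (sC X)) (m11 F) \<and>
     mat_on (gbasis (sC Y)) (gbasis (sC X)) (m21 F) \<and>
     mat_on (gbasis (sR Y)) (gbasis (sC X)) (m31 F) \<and>
     mat_on (gbasis (sC Y)) (gbasis (sR X)) (m23 F) \<and>
     mat_on (gbasis (sR Y)) (gbasis (sR X)) (m33 F)"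

definition is_smor :: "('i, 'k, 'a::comm_ring_1, 'z1) scx_scheme \<Rightarrow> ('j, 'l, 'a, 'z2) scx_scheme
    \<Rightarrow> ('i, 'k, 'j, 'l, 'a) smap \<Rightarrow> bool" where
  "is_smor X Y F \<longleftrightarrow> smap_on X Y F \<and>
     chain_map (tot X) (tot_diff X) (tot Y) (tot_diff Y) (tot_mor F)"

definition is_siso :: "('i, 'k, 'a::comm_ring_1, 'z1) scx_scheme \<Rightarrow> ('j, 'l, 'a, 'z2) scx_scheme
    \<Rightarrow> ('i, 'k, 'j, 'l, 'a) smap \<Rightarrow> bool" where
  "is_siso X Y F \<longleftrightarrow> is_smor X Y F \<and>
     (\<exists>G. is_smor Y X G \<and>
          mcomp (gbasis (tot Y)) (tot_mor G) (tot_mor F) = mid (gbasis (tot X)) \<and>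
          mcomp (gbasis (tot X)) (tot_mor F) (tot_mor G) = mid (gbasis (tot Y)))"

definition is_shtpy :: "('i, 'k, 'a::comm_ring_1, 'z1) scx_scheme \<Rightarrow> ('j, 'l, 'a, 'z2) scx_scheme
    \<Rightarrow> ('i, 'k, 'j, 'l, 'a) smap \<Rightarrow> ('i, 'k, 'j, 'l, 'a) smap \<Rightarrow> ('i, 'k, 'j, 'l, 'a) smap \<Rightarrow> bool" where
  "is_shtpy X Y F G H \<longleftrightarrow> smap_on X Y H \<and>
     is_chain_htpy (tot X) (tot_diff X) (tot Y) (tot_diff Y) (tot_mor F) (tot_mor G) (tot_htpy H)"

definition s_homotopic :: "('i, 'k, 'a::comm_ring_1, 'z1) scx_scheme \<Rightarrow> ('j, 'l, 'a, 'z2) scx_scheme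
    \<Rightarrow> ('i, 'k, 'j, 'l, 'a) smap \<Rightarrow> ('i, 'k, 'j, 'l, 'a) smap \<Rightarrow> bool" where
  "s_homotopic X Y F G \<longleftrightarrow> (\<exists>H. is_shtpy X Y F G H)"

end

theory Submission
  imports Defs
begin

lemma mcomp_assoc:
  "mcomp B1 (mcomp B2 f g) h = mcomp B2 f (mcomp B1 g h)"
  unfolding mcomp_def
  by (simp add: fun_eq_iff sum_distrib_left sum_distrib_right mult.assoc sum.swap[where A=B1])

lemma mcomp_madd_left: "mcomp B (madd f g) h = madd (mcomp B f h) (mcomp B g h)"
  unfolding mcomp_def madd_def by (simp add: fun_eq_iff distrib_right sum.distrib)
lemma mcomp_madd_right: "mcomp B h (madd f g) = madd (mcomp B h f) (mcomp B h g)"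
  unfolding mcomp_def madd_def by (simp add: fun_eq_iff distrib_left sum.distrib)
lemma mcomp_msub_left: "mcomp B (msub f g) h = msub (mcomp B f h) (mcomp B g h)"
  unfolding mcomp_def msub_def by (simp add: fun_eq_iff left_diff_distrib sum_subtractf)
lemma mcomp_msub_right: "mcomp B h (msub f g) = msub (mcomp B h f) (mcomp B h g)"
  unfolding mcomp_def msub_def by (simp add: fun_eq_iff right_diff_distrib sum_subtractf)
lemma mcomp_mneg_left: "mcomp B (mneg f) h = mneg (mcomp B f h)"
  unfolding mcomp_def mneg_def by (simp add: fun_eq_iff sum_negf)
lemma mcomp_mneg_right: "mcomp B h (mneg f) = mneg (mcomp B h f)"
  unfolding mcomp_def mneg_def by (simp add: fun_eq_iff sum_negf)
lemma mcomp_zmat_left[simp]: "mcomp B zmat h = zmat"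
  unfolding mcomp_def zmat_def by (simp add: fun_eq_iff)
lemma mcomp_zmat_right[simp]: "mcomp B h zmat = zmat"
  unfolding mcomp_def zmat_def by (simp add: fun_eq_iff)
lemma madd_zmat[simp]: "madd zmat (f::_\<Rightarrow>_\<Rightarrow>'a::comm_ring_1) = f" "madd f zmat = f"
  unfolding madd_def zmat_def by (simp_all add: fun_eq_iff)
lemma msub_zmat[simp]: "msub (f::_\<Rightarrow>_\<Rightarrow>'a::comm_ring_1) zmat = f" "msub zmat f = mneg f"
  unfolding msub_def zmat_def mneg_def by (simp_all add: fun_eq_iff)
lemma mneg_zmat[simp]: "mneg zmat = (zmat::_\<Rightarrow>_\<Rightarrow>'a::comm_ring_1)" "mneg (mneg (f::_\<Rightarrow>_\<Rightarrow>'a::comm_ring_1)) = f"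
  unfolding mneg_def zmat_def by (simp_all add: fun_eq_iff)

lemma mid_left:
  assumes "finite BW" "mat_on BW BV f"
  shows "mcomp BW (mid BW) f = f"
proof -
  have "(\<Sum>i\<in>BW. (if i \<in> BW \<and> j = i then 1 else 0) * f i k) = f j k" for j k
  proof -
    have "(\<Sum>i\<in>BW. (if i \<in> BW \<and> j = i then 1 else 0) * f i k) = (\<Sum>i\<in>BW. if j = i then f i k else 0)"
      by (rule sum.cong) auto
    also have "\<dots> = (if j \<in> BW then f j k else 0)" using assms(1) by simp
    also have "\<dots> = f j k" using assms(2) unfolding mat_on_def by auto
    finally show ?thesis .
  qed
  then show ?thesis unfolding mcomp_def mid_def by (simp add: fun_eq_iff)
qed

lemma mid_right:
  assumes "finite BV" "mat_on BW BV f"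
  shows "mcomp BV f (mid BV) = f"
proof -
  have "(\<Sum>i\<in>BV. f j i * (if k \<in> BV \<and> i = k then 1 else 0)) = f j k" for j k
  proof -
    have "(\<Sum>i\<in>BV. f j i * (if k \<in> BV \<and> i = k then 1 else 0)) = (\<Sum>i\<in>BV. if k = i then f j i else 0)"
      by (rule sum.cong) auto
    also have "\<dots> = (if k \<in> BV then f j k else 0)" using assms(1) by simp
    also have "\<dots> = f j k" using assms(2) unfolding mat_on_def by auto
    finally show ?thesis .
  qed
  then show ?thesis unfolding mcomp_def mid_def by (simp add: fun_eq_iff)
qed

lemma mcomp_nz: "mcomp B f g k j \<noteq> 0 \<Longrightarrow> \<exists>i\<in>B. f k i \<noteq> 0 \<and> g i j \<noteq> 0"
  unfolding mcomp_def by (metis (mono_tags, lifting) mult_not_zero sum.neutral)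

lemma mat_on_mcomp: "mat_on A B1 f \<Longrightarrow> mat_on B2 C g \<Longrightarrow> mat_on A C (mcomp B f g)"
  unfolding mat_on_def by (meson mcomp_nz)


lemma hom_deg_mcomp': "hom_deg dA dB k1 f \<Longrightarrow> hom_deg dB dC k2 g \<Longrightarrow> k = k1 + k2 \<Longrightarrow> hom_deg dA dC k (mcomp B f g)"
  unfolding hom_deg_def by (smt (verit) mcomp_nz)

lemma nz_add: "a + b \<noteq> (0::'a::comm_ring_1) \<Longrightarrow> a \<noteq> 0 \<or> b \<noteq> 0" by auto
lemma nz_sub: "a - b \<noteq> (0::'a::comm_ring_1) \<Longrightarrow> a \<noteq> 0 \<or> b \<noteq> 0" by auto

lemma mat_on_madd: "mat_on A B (f::_\<Rightarrow>_\<Rightarrow>'a::comm_ring_1) \<Longrightarrow> mat_on A B g \<Longrightarrow> mat_on A B (madd f g)"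
  unfolding mat_on_def madd_def by (blast dest: nz_add)
lemma mat_on_msub: "mat_on A B (f::_\<Rightarrow>_\<Rightarrow>'a::comm_ring_1) \<Longrightarrow> mat_on A B g \<Longrightarrow> mat_on A B (msub f g)"
  unfolding mat_on_def msub_def by (blast dest: nz_sub)
lemma mat_on_mneg: "mat_on A B (f::_\<Rightarrow>_\<Rightarrow>'a::comm_ring_1) \<Longrightarrow> mat_on A B (mneg f)"
  unfolding mat_on_def mneg_def by auto
lemma mat_on_zmat[simp]: "mat_on A B zmat"
  unfolding mat_on_def zmat_def by auto
lemma hom_deg_madd: "hom_deg A B k (f::_\<Rightarrow>_\<Rightarrow>'a::comm_ring_1) \<Longrightarrow> hom_deg A B k g \<Longrightarrow> hom_deg A B k (madd f g)"
  unfolding hom_deg_def madd_def by (blast dest: nz_add)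
lemma hom_deg_msub: "hom_deg A B k (f::_\<Rightarrow>_\<Rightarrow>'a::comm_ring_1) \<Longrightarrow> hom_deg A B k g \<Longrightarrow> hom_deg A B k (msub f g)"
  unfolding hom_deg_def msub_def by (blast dest: nz_sub)
lemma hom_deg_mneg: "hom_deg A B k (f::_\<Rightarrow>_\<Rightarrow>'a::comm_ring_1) \<Longrightarrow> hom_deg A B k (mneg f)"
  unfolding hom_deg_def mneg_def by auto

definition U3 :: "'i set \<Rightarrow> 'k set \<Rightarrow> (('i+'i)+'k) set" where
  "U3 B R = Inl ` Inl ` B \<union> Inl ` Inr ` B \<union> Inr ` R"

lemma gbasis_tot: "gbasis (tot X) = U3 (gbasis (sC X)) (gbasis (sR X))"
  unfolding tot_def dsum3_def gbasis_def U3_def by simp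

lemma sum_U3:
  assumes "finite B" "finite R"
  shows "sum h (U3 B R) = sum (\<lambda>i. h (Inl (Inl i))) B + sum (\<lambda>i. h (Inl (Inr i))) B + sum (\<lambda>k. h (Inr k)) R"
proof -
  have "sum h (U3 B R) = sum h (Inl ` Inl ` B \<union> Inl ` Inr ` B) + sum h (Inr ` R)"
    unfolding U3_def using assms by (intro sum.union_disjoint) auto
  also have "sum h (Inl ` Inl ` B \<union> Inl ` Inr ` B) = sum h (Inl ` Inl ` B) + sum h (Inl ` Inr ` B)"
    using assms by (intro sum.union_disjoint) auto
  also have "sum h (Inl ` Inl ` B) = sum (\<lambda>i. h (Inl (Inl i))) B"
    unfolding image_image by (subst sum.reindex) (auto simp: inj_on_def)
  also have "sum h (Inl ` Inr ` B) = sum (\<lambda>i. h (Inl (Inr i))) B"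
    unfolding image_image by (subst sum.reindex) (auto simp: inj_on_def)
  also have "sum h (Inr ` R) = sum (\<lambda>i. h (Inr i)) R"
    unfolding image_image by (subst sum.reindex) (auto simp: inj_on_def)
  finally show ?thesis .
qed

lemma blk_mult:
  assumes "finite B" "finite R"
  shows "mcomp (U3 B R) (blk A11 A12 A13 A21 A22 A23 A31 A32 A33) (blk B11 B12 B13 B21 B22 B23 B31 B32 B33)
   = blk (madd (madd (mcomp B A11 B11) (mcomp B A12 B21)) (mcomp R A13 B31))
         (madd (madd (mcomp B A11 B12) (mcomp B A12 B22)) (mcomp R A13 B32))
         (madd (madd (mcomp B A11 B13) (mcomp B A12 B23)) (mcomp R A13 B33))
         (madd (madd (mcomp B A21 B11) (mcomp B A22 B21)) (mcomp R A23 B31))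
         (madd (madd (mcomp B A21 B12) (mcomp B A22 B22)) (mcomp R A23 B32))
         (madd (madd (mcomp B A21 B13) (mcomp B A22 B23)) (mcomp R A23 B33))
         (madd (madd (mcomp B A31 B11) (mcomp B A32 B21)) (mcomp R A33 B31))
         (madd (madd (mcomp B A31 B12) (mcomp B A32 B22)) (mcomp R A33 B32))
         (madd (madd (mcomp B A31 B13) (mcomp B A32 B23)) (mcomp R A33 B33))"
  unfolding fun_eq_iff
proof (intro allI)
  fix p q
  show "mcomp (U3 B R) (blk A11 A12 A13 A21 A22 A23 A31 A32 A33) (blk B11 B12 B13 B21 B22 B23 B31 B32 B33) p q = blk (madd (madd (mcomp B A11 B11) (mcomp B A12 B21)) (mcomp R A13 B31))
         (madd (madd (mcomp B A11 B12) (mcomp B A12 B22)) (mcomp R A13 B32))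
         (madd (madd (mcomp B A11 B13) (mcomp B A12 B23)) (mcomp R A13 B33))
         (madd (madd (mcomp B A21 B11) (mcomp B A22 B21)) (mcomp R A23 B31))
         (madd (madd (mcomp B A21 B12) (mcomp B A22 B22)) (mcomp R A23 B32))
         (madd (madd (mcomp B A21 B13) (mcomp B A22 B23)) (mcomp R A23 B33))
         (madd (madd (mcomp B A31 B11) (mcomp B A32 B21)) (mcomp R A33 B31))
         (madd (madd (mcomp B A31 B12) (mcomp B A32 B22)) (mcomp R A33 B32))
         (madd (madd (mcomp B A31 B13) (mcomp B A32 B23)) (mcomp R A33 B33)) p q"
    unfolding mcomp_def[of "U3 B R"] sum_U3[OF assms]
    by (simp add: blk_def madd_def mcomp_def split: sum.split)
qed

lemma blk_madd: "madd (blk A11 A12 A13 A21 A22 A23 A31 A32 A33) (blk B11 B12 B13 B21 B22 B23 B31 B32 B33)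
  = blk (madd A11 B11) (madd A12 B12) (madd A13 B13) (madd A21 B21) (madd A22 B22) (madd A23 B23)
        (madd A31 B31) (madd A32 B32) (madd A33 B33)"
  by (simp add: fun_eq_iff blk_def madd_def split: sum.split)
lemma blk_msub: "msub (blk A11 A12 A13 A21 A22 A23 A31 A32 A33) (blk B11 B12 B13 B21 B22 B23 B31 B32 B33)
  = blk (msub A11 B11) (msub A12 B12) (msub A13 B13) (msub A21 B21) (msub A22 B22) (msub A23 B23)
        (msub A31 B31) (msub A32 B32) (msub A33 B33)"
  by (simp add: fun_eq_iff blk_def msub_def split: sum.split)

lemma mid_U3: "mid (U3 B R) = blk (mid B) zmat zmat zmat (mid B) zmat zmat zmat (mid R)"
  by (auto simp: fun_eq_iff blk_def mid_def zmat_def U3_def split: sum.split)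

lemma mat_on_blk:
  assumes "mat_on B' B A11" "mat_on B' B A12" "mat_on B' R A13" "mat_on B' B A21" "mat_on B' B A22"
    "mat_on B' R A23" "mat_on R' B A31" "mat_on R' B A32" "mat_on R' R A33"
  shows "mat_on (U3 B' R') (U3 B R) (blk A11 A12 A13 A21 A22 A23 A31 A32 A33)"
  using assms unfolding mat_on_def U3_def blk_def by (auto split: sum.split)


definition P :: "'i set \<Rightarrow> ('i \<Rightarrow> int) \<Rightarrow> int \<Rightarrow> 'i \<Rightarrow> 'i \<Rightarrow> 'a::comm_ring_1" where
  "P B dg n = (\<lambda>j i. if i \<in> B \<and> j = i \<and> dg i = n then 1 else 0)"

lemma P_left:
  assumes "finite B"
  shows "mcomp B (P B dg n) h = (\<lambda>j i. if j \<in> B \<and> dg j = n then h j i else 0)"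
proof -
  have "(\<Sum>k\<in>B. (if k \<in> B \<and> j = k \<and> dg k = n then 1 else 0) * h k i) = (\<Sum>k\<in>B. if j = k then (if dg k = n then h k i else 0) else 0)" for j i
    by (rule sum.cong) auto
  then show ?thesis using assms unfolding mcomp_def P_def by (simp add: fun_eq_iff)
qed

lemma P_right:
  assumes "finite B"
  shows "mcomp B h (P B dg n) = (\<lambda>j i. if i \<in> B \<and> dg i = n then h j i else 0)"
proof -
  have "(\<Sum>k\<in>B. h j k * (if i \<in> B \<and> k = i \<and> dg i = n then 1 else 0)) = (\<Sum>k\<in>B. if i = k then (if dg i = n \<and> i \<in> B then h j k else 0) else 0)" for j i
    by (rule sum.cong) auto
  then show ?thesis using assms unfolding mcomp_def P_def by (simp add: fun_eq_iff)
qed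

lemma mat_on_P: "mat_on B B (P B dg n)"
  unfolding mat_on_def P_def by auto

lemma deg0_iff:
  assumes "finite BW" "finite BV" "mat_on BW BV (f :: _ \<Rightarrow> _ \<Rightarrow> 'a::comm_ring_1)"
  shows "hom_deg dW dV 0 f \<longleftrightarrow> (\<forall>n. mcomp BW (P BW dW n) f = mcomp BV f (P BV dV n))"
proof
  assume h: "hom_deg dW dV 0 f"
  show "\<forall>n. mcomp BW (P BW dW n) f = mcomp BV f (P BV dV n)"
    unfolding P_left[OF assms(1)] P_right[OF assms(2)]
    using h assms(3) unfolding hom_deg_def mat_on_def by (auto simp: fun_eq_iff) (metis)
next
  assume h: "\<forall>n. mcomp BW (P BW dW n) f = mcomp BV f (P BV dV n)"
  show "hom_deg dW dV 0 f"
    unfolding hom_deg_def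
  proof (intro allI impI)
    fix j i assume nz: "f j i \<noteq> 0"
    have "mcomp BW (P BW dW (dV i)) f j i = mcomp BV f (P BV dV (dV i)) j i" using h by simp
    then show "dW j = dV i + 0"
      unfolding P_left[OF assms(1)] P_right[OF assms(2)] using nz assms(3) unfolding mat_on_def
      by (auto split: if_splits)
  qed
qed

lemma inverse_chain_map:
  assumes cm: "chain_map V d W e f" and fV: "free_gmod V" and fW: "free_gmod W"
    and md: "mat_on (gbasis V) (gbasis V) d" and me: "mat_on (gbasis W) (gbasis W) e"
    and mg: "mat_on (gbasis V) (gbasis W) g"
    and gf: "mcomp (gbasis W) g f = mid (gbasis V)" and fg: "mcomp (gbasis V) f g = mid (gbasis W)"
  shows "chain_map W e V d g"
proof -
  let ?V = "gbasis V" and ?W = "gbasis W"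
  have finV: "finite ?V" and finW: "finite ?W" using fV fW unfolding free_gmod_def by auto
  have mf: "mat_on ?W ?V f" and hf: "hom_deg (gdeg W) (gdeg V) 0 f" and comm: "mcomp ?W e f = mcomp ?V f d"
    using cm unfolding chain_map_def graded_map_def by auto
  have "mcomp ?W g e = mcomp ?W (mcomp ?W g e) (mid ?W)"
    by (rule mid_right[symmetric]) (use finW mat_on_mcomp[OF mg me] in auto)
  also have "\<dots> = mcomp ?W g (mcomp ?V (mcomp ?W e f) g)" unfolding fg[symmetric] by (simp add: mcomp_assoc)
  also have "\<dots> = mcomp ?W g (mcomp ?V (mcomp ?V f d) g)" unfolding comm ..
  also have "\<dots> = mcomp ?V (mcomp ?W g f) (mcomp ?V d g)" by (simp add: mcomp_assoc)
  also have "\<dots> = mcomp ?V d g" unfolding gf by (rule mid_left) (use finV mat_on_mcomp[OF md mg] in auto)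
  finally have c1: "mcomp ?V d g = mcomp ?W g e" ..
  have "hom_deg (gdeg V) (gdeg W) 0 g"
    unfolding deg0_iff[OF finV finW mg]
  proof
    fix n
    have fP: "mcomp ?W (P ?W (gdeg W) n) f = mcomp ?V f (P ?V (gdeg V) n)"
      using hf deg0_iff[OF finW finV mf] by auto
    have "mcomp ?W g (P ?W (gdeg W) n) = mcomp ?W (mcomp ?W g (P ?W (gdeg W) n)) (mid ?W)"
      by (rule mid_right[symmetric]) (use finW mat_on_mcomp[OF mg mat_on_P] in auto)
    also have "\<dots> = mcomp ?W g (mcomp ?V (mcomp ?W (P ?W (gdeg W) n) f) g)"
      unfolding fg[symmetric] by (simp add: mcomp_assoc)
    also have "\<dots> = mcomp ?W g (mcomp ?V (mcomp ?V f (P ?V (gdeg V) n)) g)" unfolding fP ..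
    also have "\<dots> = mcomp ?V (mcomp ?W g f) (mcomp ?V (P ?V (gdeg V) n) g)" by (simp add: mcomp_assoc)
    also have "\<dots> = mcomp ?V (P ?V (gdeg V) n) g"
      unfolding gf by (rule mid_left) (use finV mat_on_mcomp[OF mat_on_P mg] in auto)
    finally show "mcomp ?V (P ?V (gdeg V) n) g = mcomp ?W g (P ?W (gdeg W) n)" ..
  qed
  then show ?thesis unfolding chain_map_def graded_map_def using mg c1 by auto
qed

definition rows :: "'j set \<Rightarrow> ('j \<Rightarrow> 'i \<Rightarrow> 'a::zero) \<Rightarrow> bool" where
  "rows A f \<longleftrightarrow> (\<forall>j i. f j i \<noteq> 0 \<longrightarrow> j \<in> A)"
definition cols :: "'i set \<Rightarrow> ('j \<Rightarrow> 'i \<Rightarrow> 'a::zero) \<Rightarrow> bool" where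
  "cols A f \<longleftrightarrow> (\<forall>j i. f j i \<noteq> 0 \<longrightarrow> i \<in> A)"

lemma rows_mcomp[simp]: "rows A f \<Longrightarrow> rows A (mcomp B f g)"
  unfolding rows_def by (meson mcomp_nz)
lemma cols_mcomp[simp]: "cols A g \<Longrightarrow> cols A (mcomp B f g)"
  unfolding cols_def by (meson mcomp_nz)
lemma mat_on_rows: "mat_on A B f \<Longrightarrow> rows A f"
  unfolding mat_on_def rows_def by auto
lemma mat_on_cols: "mat_on A B f \<Longrightarrow> cols B f"
  unfolding mat_on_def cols_def by auto

lemma mid_left_r:
  assumes "finite BW" "rows BW f"
  shows "mcomp BW (mid BW) f = f"
proof -
  have "(\<Sum>i\<in>BW. (if i \<in> BW \<and> j = i then 1 else 0) * f i k) = f j k" for j k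
  proof -
    have "(\<Sum>i\<in>BW. (if i \<in> BW \<and> j = i then 1 else 0) * f i k) = (\<Sum>i\<in>BW. if j = i then f i k else 0)"
      by (rule sum.cong) auto
    also have "\<dots> = (if j \<in> BW then f j k else 0)" using assms(1) by simp
    also have "\<dots> = f j k" using assms(2) unfolding rows_def by auto
    finally show ?thesis .
  qed
  then show ?thesis unfolding mcomp_def mid_def by (simp add: fun_eq_iff)
qed

lemma mid_right_c:
  assumes "finite BV" "cols BV f"
  shows "mcomp BV f (mid BV) = f"
proof -
  have "(\<Sum>i\<in>BV. f j i * (if k \<in> BV \<and> i = k then 1 else 0)) = f j k" for j k
  proof -
    have "(\<Sum>i\<in>BV. f j i * (if k \<in> BV \<and> i = k then 1 else 0)) = (\<Sum>i\<in>BV. if k = i then f j i else 0)"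
      by (rule sum.cong) auto
    also have "\<dots> = (if k \<in> BV then f j k else 0)" using assms(1) by simp
    also have "\<dots> = f j k" using assms(2) unfolding cols_def by auto
    finally show ?thesis .
  qed
  then show ?thesis unfolding mcomp_def mid_def by (simp add: fun_eq_iff)
qed

lemma cancel_l:
  assumes "mcomp B f fi = mid B'" "finite B'" "rows B' h"
  shows "mcomp B f (mcomp B' fi h) = h"
  by (metis assms mcomp_assoc mid_left_r)

lemma cancel_r:
  assumes "mcomp B f fi = mid B'" "finite B'" "rows B' h"
  shows "mcomp B f (mcomp B' fi h) = h"
  by (metis assms mcomp_assoc mid_left_r)

lemma blk_eq_iff: "blk A11 A12 A13 A21 A22 A23 A31 A32 A33 = blk B11 B12 B13 B21 B22 B23 B31 B32 B33 \<longleftrightarrow>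
  A11 = B11 \<and> A12 = B12 \<and> A13 = B13 \<and> A21 = B21 \<and> A22 = B22 \<and> A23 = B23 \<and> A31 = B31 \<and> A32 = B32 \<and> A33 = B33"
proof
  assume h: "blk A11 A12 A13 A21 A22 A23 A31 A32 A33 = blk B11 B12 B13 B21 B22 B23 B31 B32 B33"
  have e: "\<And>p q. blk A11 A12 A13 A21 A22 A23 A31 A32 A33 p q = blk B11 B12 B13 B21 B22 B23 B31 B32 B33 p q"
    using h by simp
  show "A11 = B11 \<and> A12 = B12 \<and> A13 = B13 \<and> A21 = B21 \<and> A22 = B22 \<and> A23 = B23 \<and> A31 = B31 \<and> A32 = B32 \<and> A33 = B33"
    unfolding fun_eq_iff
    using e[of "Inl (Inl _)" "Inl (Inl _)"] e[of "Inl (Inl _)" "Inl (Inr _)"] e[of "Inl (Inl _)" "Inr _"]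
      e[of "Inl (Inr _)" "Inl (Inl _)"] e[of "Inl (Inr _)" "Inl (Inr _)"] e[of "Inl (Inr _)" "Inr _"]
      e[of "Inr _" "Inl (Inl _)"] e[of "Inr _" "Inl (Inr _)"] e[of "Inr _" "Inr _"]
    by (simp add: blk_def)
qed simp

lemmas bsimps = blk_mult blk_madd blk_msub mcomp_mneg_left mcomp_mneg_right blk_eq_iff
lemmas dsimps = mcomp_madd_left mcomp_madd_right mcomp_msub_left mcomp_msub_right mcomp_assoc

lemma msub_msub[simp]: "msub a (msub a b) = (b :: _ \<Rightarrow> _ \<Rightarrow> 'a::comm_ring_1)"
  unfolding msub_def by (simp add: fun_eq_iff)

lemmas mat_on_intros = mat_on_msub mat_on_madd mat_on_mcomp mat_on_mneg mat_on_zmat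

theorem lemma2p3:
  fixes X :: "('i, 'k, 'a::comm_ring_1) scx" and Y :: "('j, 'l, 'a) scx"
    and F :: "('i, 'k, 'j, 'l, 'a) smap"
  assumes "is_scx X" and "is_scx Y" and "is_smor X Y F"
    and "\<exists>f. chain_iso (sC X) (sd X) (sC Y) (sd Y) f \<and>
             chain_homotopic (sC X) (sd X) (sC Y) (sd Y) (m11 F) f"
    and "\<exists>g. chain_iso (sR X) (sr X) (sR Y) (sr Y) g \<and>
             chain_homotopic (sR X) (sr X) (sR Y) (sr Y) (m33 F) g"
  shows "\<exists>G. is_siso X Y G \<and> s_homotopic X Y F G"
proof -
  let ?BC = "gbasis (sC X)" and ?BR = "gbasis (sR X)" and ?BC' = "gbasis (sC Y)" and ?BR' = "gbasis (sR Y)"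
  let ?BX = "gbasis (tot X)" and ?BY = "gbasis (tot Y)"
  let ?DX = "tot_diff X" and ?DY = "tot_diff Y" and ?Fm = "tot_mor F"
  from assms(4) obtain f K fi where
    fcm: "chain_map (sC X) (sd X) (sC Y) (sd Y) f" and
    ficm: "chain_map (sC Y) (sd Y) (sC X) (sd X) fi" and
    fif: "mcomp ?BC' fi f = mid ?BC" and ffi: "mcomp ?BC f fi = mid ?BC'" and
    Kh: "is_chain_htpy (sC X) (sd X) (sC Y) (sd Y) (m11 F) f K"
    unfolding chain_iso_def chain_homotopic_def by blast
  from assms(5) obtain g J gi where
    gcm: "chain_map (sR X) (sr X) (sR Y) (sr Y) g" and
    gicm: "chain_map (sR Y) (sr Y) (sR X) (sr X) gi" and
    gig: "mcomp ?BR' gi g = mid ?BR" and ggi: "mcomp ?BR g gi = mid ?BR'" and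
    Jh: "is_chain_htpy (sR X) (sr X) (sR Y) (sr Y) (m33 F) g J"
    unfolding chain_iso_def chain_homotopic_def by blast
  have finC: "finite ?BC" and finR: "finite ?BR" and finC': "finite ?BC'" and finR': "finite ?BR'"
    using assms(1,2) unfolding is_scx_def free_gmod_def by auto
  have mX: "mat_on ?BC ?BC (sd X)" "mat_on ?BC ?BC (sv X)" "mat_on ?BR ?BR (sr X)"
     "mat_on ?BR ?BC (sdel1 X)" "mat_on ?BC ?BR (sdel2 X)"
    using assms(1) unfolding is_scx_def by auto
  have mY: "mat_on ?BC' ?BC' (sd Y)" "mat_on ?BC' ?BC' (sv Y)" "mat_on ?BR' ?BR' (sr Y)"
     "mat_on ?BR' ?BC' (sdel1 Y)" "mat_on ?BC' ?BR' (sdel2 Y)"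
    using assms(2) unfolding is_scx_def by auto
  have ccX: "chain_complex (tot X) ?DX" and ccY: "chain_complex (tot Y) ?DY"
    using assms(1,2) unfolding is_scx_def by auto
  have mF: "mat_on ?BC' ?BC (m11 F)" "mat_on ?BC' ?BC (m21 F)" "mat_on ?BR' ?BC (m31 F)"
      "mat_on ?BC' ?BR (m23 F)" "mat_on ?BR' ?BR (m33 F)"
    using assms(3) unfolding is_smor_def smap_on_def by auto
  have Fcm: "chain_map (tot X) ?DX (tot Y) ?DY ?Fm"
    using assms(3) unfolding is_smor_def by auto
  have mf: "mat_on ?BC' ?BC f" and mfi: "mat_on ?BC ?BC' fi"
    using fcm ficm unfolding chain_map_def graded_map_def by auto
  have mg: "mat_on ?BR' ?BR g" and mgi: "mat_on ?BR ?BR' gi"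
    using gcm gicm unfolding chain_map_def graded_map_def by auto
  have mK: "mat_on ?BC' ?BC K" and hK: "hom_deg (gdeg (sC Y)) (gdeg (sC X)) 1 K"
    and Keq: "madd (mcomp ?BC' (sd Y) K) (mcomp ?BC K (sd X)) = msub (m11 F) f"
    using Kh unfolding is_chain_htpy_def graded_map_def by auto
  have mJ: "mat_on ?BR' ?BR J" and hJ: "hom_deg (gdeg (sR Y)) (gdeg (sR X)) 1 J"
    and Jeq: "madd (mcomp ?BR' (sr Y) J) (mcomp ?BR J (sr X)) = msub (m33 F) g"
    using Jh unfolding is_chain_htpy_def graded_map_def by auto
  define H :: "('i, 'k, 'j, 'l, 'a) smap" where
    "H = \<lparr>m11 = K, m21 = zmat, m31 = zmat, m23 = zmat, m33 = J\<rparr>"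
  define A21 where "A21 = msub (m21 F) (madd (mcomp ?BC' (sv Y) K) (mneg (mcomp ?BC K (sv X))))"
  define A23 where "A23 = msub (m23 F) (madd (mcomp ?BR' (sdel2 Y) J) (mneg (mcomp ?BC K (sdel2 X))))"
  define A31 where "A31 = msub (m31 F) (madd (mcomp ?BC' (sdel1 Y) K) (mcomp ?BR J (sdel1 X)))"
  define G :: "('i, 'k, 'j, 'l, 'a) smap" where
    "G = \<lparr>m11 = f, m21 = A21, m31 = A31, m23 = A23, m33 = g\<rparr>"
  define T where "T = msub ?Fm (madd (mcomp ?BY ?DY (tot_htpy H)) (mcomp ?BX (tot_htpy H) ?DX))"
  have Ht: "tot_htpy H = blk K zmat zmat zmat (mneg K) zmat zmat zmat J"
    unfolding H_def tot_htpy_def by simp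
  have TG: "tot_mor G = T"
    unfolding T_def Ht tot_mor_def tot_diff_def gbasis_tot G_def A21_def A23_def A31_def
    by (simp add: bsimps finC finR finC' finR' Keq Jeq)
  have mA: "mat_on ?BC' ?BC A21" "mat_on ?BC' ?BR A23" "mat_on ?BR' ?BC A31"
    unfolding A21_def A23_def A31_def using mF mK mJ mX mY
    by (blast intro: mat_on_intros)+
  have gX: "graded_map (tot X) (tot X) (-1) ?DX" and DDX: "mcomp ?BX ?DX ?DX = zmat" and ftX: "free_gmod (tot X)"
    using ccX unfolding chain_complex_def by auto
  have gY: "graded_map (tot Y) (tot Y) (-1) ?DY" and DDY: "mcomp ?BY ?DY ?DY = zmat" and ftY: "free_gmod (tot Y)"
    using ccY unfolding chain_complex_def by auto
  have finX: "finite ?BX" and finY: "finite ?BY" using ftX ftY unfolding free_gmod_def by auto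
  have mDX: "mat_on ?BX ?BX ?DX" and hDX: "hom_deg (gdeg (tot X)) (gdeg (tot X)) (-1) ?DX"
    using gX unfolding graded_map_def by auto
  have mDY: "mat_on ?BY ?BY ?DY" and hDY: "hom_deg (gdeg (tot Y)) (gdeg (tot Y)) (-1) ?DY"
    using gY unfolding graded_map_def by auto
  have mFm: "mat_on ?BY ?BX ?Fm" and hFm: "hom_deg (gdeg (tot Y)) (gdeg (tot X)) 0 ?Fm"
    and cFm: "mcomp ?BY ?DY ?Fm = mcomp ?BX ?Fm ?DX"
    using Fcm unfolding chain_map_def graded_map_def by auto
  have mHt: "mat_on ?BY ?BX (tot_htpy H)"
    unfolding Ht gbasis_tot by (rule mat_on_blk) (auto intro: mK mJ mat_on_mneg)
  have hHt: "hom_deg (gdeg (tot Y)) (gdeg (tot X)) 1 (tot_htpy H)"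
    using hK hJ unfolding Ht hom_deg_def tot_def dsum3_def gdeg_def blk_def zmat_def mneg_def
    by (auto split: sum.split)
  have shtpy: "s_homotopic X Y F G"
    unfolding s_homotopic_def
  proof (intro exI)
    show "is_shtpy X Y F G H"
      unfolding is_shtpy_def is_chain_htpy_def graded_map_def
    proof (intro conjI)
      show "smap_on X Y H" unfolding smap_on_def H_def using mK mJ by simp
      show "madd (mcomp ?BY ?DY (tot_htpy H)) (mcomp ?BX (tot_htpy H) ?DX) = msub ?Fm (tot_mor G)"
        unfolding TG T_def by simp
    qed (use mHt hHt in auto)
  qed
  have DDY': "mcomp ?BY ?DY (mcomp ?BY ?DY h) = zmat" for h
    by (metis DDY mcomp_assoc mcomp_zmat_left)
  have mT: "mat_on ?BY ?BX T" unfolding T_def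
    using mFm mDX mDY mHt by (blast intro: mat_on_intros)
  have hT: "hom_deg (gdeg (tot Y)) (gdeg (tot X)) 0 T" unfolding T_def
    by (intro hom_deg_msub hom_deg_madd hFm hom_deg_mcomp'[OF hDY hHt] hom_deg_mcomp'[OF hHt hDX]) auto
  have cT: "mcomp ?BY ?DY T = mcomp ?BX T ?DX"
    unfolding T_def by (simp add: dsimps DDY' DDX cFm)
  have Gmor: "is_smor X Y G"
    unfolding is_smor_def
  proof
    show "smap_on X Y G" unfolding smap_on_def G_def using mA mf mg by simp
    show "chain_map (tot X) ?DX (tot Y) ?DY (tot_mor G)"
      unfolding TG chain_map_def graded_map_def using mT hT cT by auto
  qed
  define b where "b = mneg (mcomp ?BC' fi (mcomp ?BR A23 gi))"
  define c where "c = mneg (mcomp ?BR' gi (mcomp ?BC A31 fi))"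
  define a where "a = msub (mcomp ?BC' fi (mcomp ?BR A23 (mcomp ?BR' gi (mcomp ?BC A31 fi)))) (mcomp ?BC' fi (mcomp ?BC A21 fi))"
  define Gi :: "('j, 'l, 'i, 'k, 'a) smap" where
    "Gi = \<lparr>m11 = fi, m21 = a, m31 = c, m23 = b, m33 = gi\<rparr>"
  have mabc: "mat_on ?BC ?BC' a" "mat_on ?BC ?BR' b" "mat_on ?BR ?BC' c"
    unfolding a_def b_def c_def using mA mf mfi mg mgi
    by (blast intro: mat_on_intros)+
  have tG: "tot_mor G = blk f zmat zmat A21 f A23 A31 zmat g"
    unfolding G_def tot_mor_def by simp
  have tGi: "tot_mor Gi = blk fi zmat zmat a fi b c zmat gi"
    unfolding Gi_def tot_mor_def by simp
  have p1: "mcomp ?BY (tot_mor Gi) (tot_mor G) = mid ?BX"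
    "mcomp ?BX (tot_mor G) (tot_mor Gi) = mid ?BY"
    unfolding tG tGi gbasis_tot
    using mA[THEN mat_on_rows] mA[THEN mat_on_cols]
    apply (simp_all add: bsimps dsimps mid_U3 finC finR finC' finR' fif gig ffi ggi a_def b_def c_def
        cancel_l[OF ffi] cancel_l[OF ggi] mid_right_c)
    apply (simp_all add: fun_eq_iff madd_def msub_def mneg_def zmat_def)
    done
  have mtGi: "mat_on ?BX ?BY (tot_mor Gi)"
    unfolding tGi gbasis_tot by (rule mat_on_blk) (use mabc mfi mgi in auto)
  have Gimor: "is_smor Y X Gi"
    unfolding is_smor_def
  proof
    show "smap_on Y X Gi" unfolding smap_on_def Gi_def using mabc mfi mgi by simp
    show "chain_map (tot Y) ?DY (tot X) ?DX (tot_mor Gi)"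
      by (rule inverse_chain_map[OF _ ftX ftY mDX mDY mtGi p1])
        (use Gmor in \<open>simp add: is_smor_def\<close>)
  qed
  have "is_siso X Y G" unfolding is_siso_def using Gmor Gimor p1 by blast
  then show ?thesis using shtpy by blast
qed
end
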